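(* Under Assumptions A1–A3 (with constant $p$), the operator $T$ has a fixed point in $\mathcal H_p$ if and only if there exist $g_0,h\in\mathcal H_p$ such that $T^ng_0\to h$ in $L_p(\pi)$ as $n\to\infty$.
   Context: Standing setting: $\{X_t\}_{t\ge0}$ is a stationary Markov process on a separable completely metrizable space $\mathsf X$ with transition kernel $\Pi$ and stationary law $\pi$; $\{\eta_t\}$ iid with law $\nu$ on $\mathsf W$, independent of $\{X_t\}$; $\phi,g\ge0$ Borel on $\mathsf X\times\mathsf X\times\mathsf W$ with $\Phi_{t+1}=\phi(X_t,X_{t+1},\eta_{t+1})$, $G_{t+1}=g(X_t,X_{t+1},\eta_{t+1})$. $\mathcal H_p$ is the set of nonnegative functions in $L_p(\pi)$. Valuation operator $Vh(x)=\int h(y)[\int\phi(x,y,\eta)\nu(d\eta)]\Pi(x,dy)$; $\hat g(x)=\int\int\phi g\,d\nu\,\Pi(x,dy)$; $Th=Vh+\hat g$. A1: $\phi>0$ everywhere and $G_t>0$ with positive probability. A2: for all Borel $B$ with $\pi(B)>0$ and all $x$, $\Pi^n(x,B)>0$ for some $n$. A3: for some $p\ge1$, $\hat g\in\mathcal H_p$ and $V$ maps $L_p(\pi)$ into itself with some power $V^i$ compact. *)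

theory Defs
  imports "HOL-Probability.Probability"
begin

section \<open>L_p(pi) for real-valued functions (functions, equality up to pi-null sets)\<close>

definition Lp_mem :: "'a measure \<Rightarrow> real \<Rightarrow> ('a \<Rightarrow> real) \<Rightarrow> bool" where
  "Lp_mem M p f \<longleftrightarrow> f \<in> borel_measurable M \<and> integrable M (\<lambda>x. \<bar>f x\<bar> powr p)"

definition Lp_norm :: "'a measure \<Rightarrow> real \<Rightarrow> ('a \<Rightarrow> real) \<Rightarrow> real" where
  "Lp_norm M p f = (\<integral>x. \<bar>f x\<bar> powr p \<partial>M) powr (1 / p)"

definition Hp :: "'a measure \<Rightarrow> real \<Rightarrow> ('a \<Rightarrow> real) \<Rightarrow> bool" where
  "Hp M p f \<longleftrightarrow> Lp_mem M p f \<and> (AE x in M. 0 \<le> f x)"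

fun kernel_pow :: "('a::topological_space \<Rightarrow> 'a measure) \<Rightarrow> nat \<Rightarrow> 'a \<Rightarrow> 'a measure" where
  "kernel_pow K 0 = (\<lambda>x. return borel x)"
| "kernel_pow K (Suc n) = (\<lambda>x. K x \<bind> kernel_pow K n)"

definition phihat :: "'w measure \<Rightarrow> ('x \<Rightarrow> 'x \<Rightarrow> 'w \<Rightarrow> real) \<Rightarrow> 'x \<Rightarrow> 'x \<Rightarrow> ennreal" where
  "phihat \<nu> \<phi> x y = (\<integral>\<^sup>+ \<eta>. ennreal (\<phi> x y \<eta>) \<partial>\<nu>)"

definition Vop :: "('x \<Rightarrow> 'x measure) \<Rightarrow> 'w measure \<Rightarrow> ('x \<Rightarrow> 'x \<Rightarrow> 'w \<Rightarrow> real)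
    \<Rightarrow> ('x \<Rightarrow> real) \<Rightarrow> 'x \<Rightarrow> real" where
  "Vop K \<nu> \<phi> h x = (\<integral>y. h y * enn2real (phihat \<nu> \<phi> x y) \<partial>(K x))"

definition ghat_enn :: "('x \<Rightarrow> 'x measure) \<Rightarrow> 'w measure \<Rightarrow> ('x \<Rightarrow> 'x \<Rightarrow> 'w \<Rightarrow> real)
    \<Rightarrow> ('x \<Rightarrow> 'x \<Rightarrow> 'w \<Rightarrow> real) \<Rightarrow> 'x \<Rightarrow> ennreal" where
  "ghat_enn K \<nu> \<phi> g x = (\<integral>\<^sup>+ y. (\<integral>\<^sup>+ \<eta>. ennreal (\<phi> x y \<eta> * g x y \<eta>) \<partial>\<nu>) \<partial>(K x))"

definition ghat :: "('x \<Rightarrow> 'x measure) \<Rightarrow> 'w measure \<Rightarrow> ('x \<Rightarrow> 'x \<Rightarrow> 'w \<Rightarrow> real)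
    \<Rightarrow> ('x \<Rightarrow> 'x \<Rightarrow> 'w \<Rightarrow> real) \<Rightarrow> 'x \<Rightarrow> real" where
  "ghat K \<nu> \<phi> g x = enn2real (ghat_enn K \<nu> \<phi> g x)"

definition Top :: "('x \<Rightarrow> 'x measure) \<Rightarrow> 'w measure \<Rightarrow> ('x \<Rightarrow> 'x \<Rightarrow> 'w \<Rightarrow> real)
    \<Rightarrow> ('x \<Rightarrow> 'x \<Rightarrow> 'w \<Rightarrow> real) \<Rightarrow> ('x \<Rightarrow> real) \<Rightarrow> 'x \<Rightarrow> real" where
  "Top K \<nu> \<phi> g h x = Vop K \<nu> \<phi> h x + ghat K \<nu> \<phi> g x"

definition standing_setting :: "'x::polish_space measure \<Rightarrow> ('x \<Rightarrow> 'x measure) \<Rightarrow> 'w measure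
    \<Rightarrow> ('x \<Rightarrow> 'x \<Rightarrow> 'w \<Rightarrow> real) \<Rightarrow> ('x \<Rightarrow> 'x \<Rightarrow> 'w \<Rightarrow> real) \<Rightarrow> bool" where
  "standing_setting \<pi> K \<nu> \<phi> g \<longleftrightarrow>
     prob_space \<pi> \<and> sets \<pi> = sets borel \<and>
     K \<in> borel \<rightarrow>\<^sub>M prob_algebra borel \<and>
     (\<forall>B\<in>sets borel. emeasure \<pi> B = (\<integral>\<^sup>+ x. emeasure (K x) B \<partial>\<pi>)) \<and>
     prob_space \<nu> \<and>
     (\<lambda>(x, y, \<eta>). \<phi> x y \<eta>) \<in> borel_measurable (borel \<Otimes>\<^sub>M borel \<Otimes>\<^sub>M \<nu>) \<and>
     (\<lambda>(x, y, \<eta>). g x y \<eta>) \<in> borel_measurable (borel \<Otimes>\<^sub>M borel \<Otimes>\<^sub>M \<nu>) \<and>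
     (\<forall>x y \<eta>. 0 \<le> \<phi> x y \<eta>) \<and> (\<forall>x y \<eta>. 0 \<le> g x y \<eta>)"

text \<open>A1: phi > 0 everywhere and P(G_t > 0) > 0, where (X_t, X_{t+1}, eta_{t+1}) has
  joint law pi(dx) Pi(x,dy) nu(d eta).\<close>
definition A1 :: "'x::polish_space measure \<Rightarrow> ('x \<Rightarrow> 'x measure) \<Rightarrow> 'w measure
    \<Rightarrow> ('x \<Rightarrow> 'x \<Rightarrow> 'w \<Rightarrow> real) \<Rightarrow> ('x \<Rightarrow> 'x \<Rightarrow> 'w \<Rightarrow> real) \<Rightarrow> bool" where
  "A1 \<pi> K \<nu> \<phi> g \<longleftrightarrow>
     (\<forall>x y \<eta>. 0 < \<phi> x y \<eta>) \<and>
     0 < (\<integral>\<^sup>+ x. (\<integral>\<^sup>+ y. (\<integral>\<^sup>+ \<eta>. indicator {\<eta>. 0 < g x y \<eta>} \<eta> \<partial>\<nu>) \<partial>(K x)) \<partial>\<pi>)"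

definition A2 :: "'x::polish_space measure \<Rightarrow> ('x \<Rightarrow> 'x measure) \<Rightarrow> bool" where
  "A2 \<pi> K \<longleftrightarrow>
     (\<forall>B\<in>sets borel. 0 < measure \<pi> B \<longrightarrow> (\<forall>x. \<exists>n\<ge>1. 0 < measure (kernel_pow K n x) B))"

definition compact_Lp_op :: "'a measure \<Rightarrow> real \<Rightarrow> (('a \<Rightarrow> real) \<Rightarrow> ('a \<Rightarrow> real)) \<Rightarrow> bool" where
  "compact_Lp_op M p A \<longleftrightarrow>
     (\<forall>hs :: nat \<Rightarrow> 'a \<Rightarrow> real. (\<forall>n. Lp_mem M p (hs n)) \<and> bounded (range (\<lambda>n. Lp_norm M p (hs n))) \<longrightarrow>
        (\<exists>(r :: nat \<Rightarrow> nat) (f :: 'a \<Rightarrow> real). strict_mono r \<and> Lp_mem M p f \<and>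
           (\<lambda>n. Lp_norm M p (\<lambda>x. A (hs (r n)) x - f x)) \<longlonglongrightarrow> 0))"

text \<open>A3 (with constant p): ghat in H_p; V maps L_p(pi) into itself (the defining
  integral converges absolutely for pi-a.e. x and Vh lies in L_p); some power of V compact.\<close>
definition A3 :: "'x::polish_space measure \<Rightarrow> ('x \<Rightarrow> 'x measure) \<Rightarrow> 'w measure
    \<Rightarrow> ('x \<Rightarrow> 'x \<Rightarrow> 'w \<Rightarrow> real) \<Rightarrow> ('x \<Rightarrow> 'x \<Rightarrow> 'w \<Rightarrow> real) \<Rightarrow> real \<Rightarrow> bool" where
  "A3 \<pi> K \<nu> \<phi> g p \<longleftrightarrow>
     1 \<le> p \<and>
     (AE x in \<pi>. ghat_enn K \<nu> \<phi> g x < \<infinity>) \<and> Hp \<pi> p (ghat K \<nu> \<phi> g) \<and>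
     (\<forall>h. Lp_mem \<pi> p h \<longrightarrow>
        (AE x in \<pi>. (\<integral>\<^sup>+ y. ennreal \<bar>h y\<bar> * phihat \<nu> \<phi> x y \<partial>(K x)) < \<infinity>) \<and>
        Lp_mem \<pi> p (Vop K \<nu> \<phi> h)) \<and>
     (\<exists>i. compact_Lp_op \<pi> p (Vop K \<nu> \<phi> ^^ i))"

end

theory Submission
  imports Defs
begin

locale mt =
  fixes \<pi> :: "'x::polish_space measure" and K :: "'x \<Rightarrow> 'x measure"
    and \<nu> :: "'w measure" and \<phi> g :: "'x \<Rightarrow> 'x \<Rightarrow> 'w \<Rightarrow> real" and p :: real
  assumes SS: "standing_setting \<pi> K \<nu> \<phi> g"
    and AA3: "A3 \<pi> K \<nu> \<phi> g p"
begin

lemma pi_sets: "sets \<pi> = sets borel" and pi_prob: "prob_space \<pi>"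
  using SS unfolding standing_setting_def by auto

lemma pi_space: "space \<pi> = UNIV"
  using sets_eq_imp_space_eq[OF pi_sets] by simp

lemma Kmeas: "K \<in> borel \<rightarrow>\<^sub>M prob_algebra borel"
  using SS unfolding standing_setting_def by auto

lemma K_sets: "sets (K x) = sets borel" and K_prob: "prob_space (K x)"
  using measurable_space[OF Kmeas, of x] by (auto simp: space_prob_algebra)

lemma K_space: "space (K x) = UNIV"
  using sets_eq_imp_space_eq[OF K_sets] by simp

lemma stat: "B \<in> sets borel \<Longrightarrow> emeasure \<pi> B = (\<integral>\<^sup>+ x. emeasure (K x) B \<partial>\<pi>)"
  using SS unfolding standing_setting_def by auto

lemma p_ge: "1 \<le> p"
  using AA3 unfolding A3_def by auto

lemma meas_pi: "measurable \<pi> N = measurable borel N"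
  by (rule measurable_cong_sets[OF pi_sets refl])

lemma meas_K: "measurable (K x) N = measurable borel N"
  by (rule measurable_cong_sets[OF K_sets refl])

lemma transfer:
  assumes "AE x in \<pi>. P x"
  shows "AE x in \<pi>. AE y in K x. P y"
proof -
  from assms obtain N where N: "{x \<in> space \<pi>. \<not> P x} \<subseteq> N" "emeasure \<pi> N = 0" "N \<in> sets \<pi>"
    by (rule AE_E)
  have Nb: "N \<in> sets borel" using N(3) pi_sets by simp
  have m: "(\<lambda>x. emeasure (K x) N) \<in> borel_measurable \<pi>"
    unfolding meas_pi
    by (rule measurable_compose[OF measurable_prob_algebraD[OF Kmeas] measurable_emeasure_subprob_algebra[OF Nb]])
  have "(\<integral>\<^sup>+ x. emeasure (K x) N \<partial>\<pi>) = 0" using stat[OF Nb] N(2) by simp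
  then have "AE x in \<pi>. emeasure (K x) N = 0" using nn_integral_0_iff_AE[OF m] by simp
  then show ?thesis
  proof (rule eventually_mono)
    fix x assume "emeasure (K x) N = 0"
    then have "N \<in> null_sets (K x)" using Nb K_sets by (auto simp: null_sets_def)
    moreover have "{y \<in> space (K x). \<not> P y} \<subseteq> N" using N(1) by (auto simp: K_space pi_space)
    ultimately show "AE y in K x. P y" by (rule AE_I')
  qed
qed

lemma phi_meas: "(\<lambda>(x, y, \<eta>). \<phi> x y \<eta>) \<in> borel_measurable (borel \<Otimes>\<^sub>M borel \<Otimes>\<^sub>M \<nu>)"
  and nu_prob: "prob_space \<nu>"
  using SS unfolding standing_setting_def by auto

lemma phihat_meas: "(\<lambda>y. phihat \<nu> \<phi> x y) \<in> borel_measurable borel"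
proof -
  interpret nu: prob_space \<nu> by (rule nu_prob)
  have "(\<lambda>(y, \<eta>). \<phi> x y \<eta>) \<in> borel_measurable (borel \<Otimes>\<^sub>M \<nu>)"
  proof -
    have "(\<lambda>z. (\<lambda>(x, y, \<eta>). \<phi> x y \<eta>) (x, z)) \<in> borel_measurable (borel \<Otimes>\<^sub>M \<nu>)"
      using phi_meas by measurable
    then show ?thesis by (simp add: case_prod_beta)
  qed
  then have "(\<lambda>(y, \<eta>). ennreal (\<phi> x y \<eta>)) \<in> borel_measurable (borel \<Otimes>\<^sub>M \<nu>)"
    by (simp add: case_prod_beta)
  from nu.borel_measurable_nn_integral[OF this] show ?thesis
    unfolding phihat_def by simp
qed

lemma ghat_Hp: "Hp \<pi> p (ghat K \<nu> \<phi> g)"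
  using AA3 unfolding A3_def by auto

lemma V_Lp: "Lp_mem \<pi> p h \<Longrightarrow> Lp_mem \<pi> p (Vop K \<nu> \<phi> h)"
  using AA3 unfolding A3_def by auto

lemma V_fin: "Lp_mem \<pi> p h \<Longrightarrow>
   AE x in \<pi>. (\<integral>\<^sup>+ y. ennreal \<bar>h y\<bar> * phihat \<nu> \<phi> x y \<partial>(K x)) < \<infinity>"
  using AA3 unfolding A3_def by auto

lemma Lp_meas: "Lp_mem \<pi> p h \<Longrightarrow> h \<in> borel_measurable borel"
  unfolding Lp_mem_def meas_pi by simp

lemma ghat_meas: "ghat K \<nu> \<phi> g \<in> borel_measurable borel"
  using ghat_Hp Lp_meas unfolding Hp_def by blast

lemma integrand_meas: "h \<in> borel_measurable borel \<Longrightarrow>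
   (\<lambda>y. h y * enn2real (phihat \<nu> \<phi> x y)) \<in> borel_measurable (K x)"
  unfolding meas_K by (intro borel_measurable_times borel_measurable_enn2real[OF phihat_meas])

lemma integrable_K:
  assumes "h \<in> borel_measurable borel"
    and "(\<integral>\<^sup>+ y. ennreal \<bar>h y\<bar> * phihat \<nu> \<phi> x y \<partial>(K x)) < \<infinity>"
  shows "integrable (K x) (\<lambda>y. h y * enn2real (phihat \<nu> \<phi> x y))"
proof (rule integrableI_bounded)
  show "(\<lambda>y. h y * enn2real (phihat \<nu> \<phi> x y)) \<in> borel_measurable (K x)"
    using integrand_meas[OF assms(1)] .
  have "(\<integral>\<^sup>+ y. ennreal (norm (h y * enn2real (phihat \<nu> \<phi> x y))) \<partial>(K x))
      \<le> (\<integral>\<^sup>+ y. ennreal \<bar>h y\<bar> * phihat \<nu> \<phi> x y \<partial>(K x))"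
  proof (rule nn_integral_mono)
    fix y
    have "ennreal (norm (h y * enn2real (phihat \<nu> \<phi> x y)))
        = ennreal \<bar>h y\<bar> * ennreal (enn2real (phihat \<nu> \<phi> x y))"
      by (simp add: abs_mult ennreal_mult)
    also have "\<dots> \<le> ennreal \<bar>h y\<bar> * phihat \<nu> \<phi> x y"
      by (intro mult_left_mono) (auto simp: ennreal_enn2real_if)
    finally show "ennreal (norm (h y * enn2real (phihat \<nu> \<phi> x y))) \<le> ennreal \<bar>h y\<bar> * phihat \<nu> \<phi> x y" .
  qed
  then show "(\<integral>\<^sup>+ y. ennreal (norm (h y * enn2real (phihat \<nu> \<phi> x y))) \<partial>(K x)) < \<infinity>"
    using assms(2) by (rule le_less_trans)
qed

definition W :: "('x \<Rightarrow> real) \<Rightarrow> 'x \<Rightarrow> ennreal" where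
  "W h x = (\<integral>\<^sup>+ y. ennreal (h y * enn2real (phihat \<nu> \<phi> x y)) \<partial>(K x))"

lemma V_eq:
  assumes "h \<in> borel_measurable borel" "AE y in K x. 0 \<le> h y"
  shows "Vop K \<nu> \<phi> h x = enn2real (W h x)"
  unfolding Vop_def W_def
  by (rule integral_eq_nn_integral[OF integrand_meas[OF assms(1)]])
     (use assms(2) in \<open>auto elim!: eventually_mono\<close>)

lemma W_le: "W h x \<le> (\<integral>\<^sup>+ y. ennreal \<bar>h y\<bar> * phihat \<nu> \<phi> x y \<partial>(K x))"
  unfolding W_def
proof (rule nn_integral_mono)
  fix y
  show "ennreal (h y * enn2real (phihat \<nu> \<phi> x y)) \<le> ennreal \<bar>h y\<bar> * phihat \<nu> \<phi> x y"
  proof (cases "0 \<le> h y")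
    case True
    then have "ennreal (h y * enn2real (phihat \<nu> \<phi> x y))
        = ennreal \<bar>h y\<bar> * ennreal (enn2real (phihat \<nu> \<phi> x y))"
      by (simp add: ennreal_mult)
    also have "\<dots> \<le> ennreal \<bar>h y\<bar> * phihat \<nu> \<phi> x y"
      by (intro mult_left_mono) (auto simp: ennreal_enn2real_if)
    finally show ?thesis .
  next
    case False
    then have "h y * enn2real (phihat \<nu> \<phi> x y) \<le> 0"
      by (simp add: mult_nonpos_nonneg)
    then show ?thesis by (simp add: ennreal_neg)
  qed
qed

lemma Vop_nonneg: "AE y in K x. 0 \<le> h y \<Longrightarrow> 0 \<le> Vop K \<nu> \<phi> h x"
  unfolding Vop_def by (rule integral_nonneg_AE) (auto elim!: eventually_mono)

lemma Vop_cong: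
  assumes "h \<in> borel_measurable borel" "h' \<in> borel_measurable borel" "AE y in K x. h y = h' y"
  shows "Vop K \<nu> \<phi> h x = Vop K \<nu> \<phi> h' x"
  unfolding Vop_def
  by (rule integral_cong_AE[OF integrand_meas[OF assms(1)] integrand_meas[OF assms(2)]])
     (use assms(3) in \<open>auto elim!: eventually_mono\<close>)

lemma Lp_dom:
  assumes "u \<in> borel_measurable borel" "Lp_mem \<pi> p h" "AE x in \<pi>. \<bar>u x\<bar> \<le> \<bar>h x\<bar>"
  shows "Lp_mem \<pi> p u"
  unfolding Lp_mem_def
proof
  show "u \<in> borel_measurable \<pi>" using assms(1) by (simp add: meas_pi)
  show "integrable \<pi> (\<lambda>x. \<bar>u x\<bar> powr p)"
  proof (rule Bochner_Integration.integrable_bound[where f="\<lambda>x. \<bar>h x\<bar> powr p"])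
    show "integrable \<pi> (\<lambda>x. \<bar>h x\<bar> powr p)" using assms(2) unfolding Lp_mem_def by simp
    show "(\<lambda>x. \<bar>u x\<bar> powr p) \<in> borel_measurable \<pi>" using assms(1) by (simp add: meas_pi)
    show "AE x in \<pi>. norm (\<bar>u x\<bar> powr p) \<le> norm (\<bar>h x\<bar> powr p)"
      using assms(3) p_ge by (auto elim!: eventually_mono intro!: powr_mono2)
  qed
qed

lemma powr_add_le:
  fixes a b :: real
  shows "\<bar>a + b\<bar> powr p \<le> 2 powr p * (\<bar>a\<bar> powr p + \<bar>b\<bar> powr p)"
proof -
  have p0: "0 \<le> p" using p_ge by simp
  have "\<bar>a + b\<bar> powr p \<le> (2 * max \<bar>a\<bar> \<bar>b\<bar>) powr p"
    by (rule powr_mono2[OF p0]) auto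
  also have "\<dots> = 2 powr p * max \<bar>a\<bar> \<bar>b\<bar> powr p"
    by (simp add: powr_mult)
  also have "\<dots> \<le> 2 powr p * (\<bar>a\<bar> powr p + \<bar>b\<bar> powr p)"
    by (intro mult_left_mono) (auto simp: max_def)
  finally show ?thesis .
qed

lemma Lp_add:
  assumes "Lp_mem \<pi> p a" "Lp_mem \<pi> p b"
  shows "Lp_mem \<pi> p (\<lambda>x. a x + b x)"
  unfolding Lp_mem_def
proof
  show "(\<lambda>x. a x + b x) \<in> borel_measurable \<pi>" using assms unfolding Lp_mem_def by (auto intro!: borel_measurable_add)
  show "integrable \<pi> (\<lambda>x. \<bar>a x + b x\<bar> powr p)"
  proof (rule Bochner_Integration.integrable_bound[where f="\<lambda>x. 2 powr p * (\<bar>a x\<bar> powr p + \<bar>b x\<bar> powr p)"])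
    show "integrable \<pi> (\<lambda>x. 2 powr p * (\<bar>a x\<bar> powr p + \<bar>b x\<bar> powr p))"
      using assms unfolding Lp_mem_def by simp
    have [measurable]: "a \<in> borel_measurable \<pi>" "b \<in> borel_measurable \<pi>" using assms unfolding Lp_mem_def by auto
    show "(\<lambda>x. \<bar>a x + b x\<bar> powr p) \<in> borel_measurable \<pi>" by measurable
    show "AE x in \<pi>. norm (\<bar>a x + b x\<bar> powr p) \<le> norm (2 powr p * (\<bar>a x\<bar> powr p + \<bar>b x\<bar> powr p))"
      using powr_add_le by auto
  qed
qed

lemma Lp_uminus: "Lp_mem \<pi> p a \<Longrightarrow> Lp_mem \<pi> p (\<lambda>x. - a x)"
  unfolding Lp_mem_def by simp

lemma T_Lp: "Lp_mem \<pi> p h \<Longrightarrow> Lp_mem \<pi> p (Top K \<nu> \<phi> g h)"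
  unfolding Top_def using Lp_add[OF V_Lp ghat_Hp[unfolded Hp_def, THEN conjunct1]] by simp

abbreviation TT where "TT \<equiv> Top K \<nu> \<phi> g"
abbreviation VV where "VV \<equiv> Vop K \<nu> \<phi>"
abbreviation gh where "gh \<equiv> ghat K \<nu> \<phi> g"

lemma gh_nonneg: "0 \<le> gh x"
  unfolding ghat_def by simp

lemma TT_eq: "TT h x = VV h x + gh x"
  unfolding Top_def by simp

lemma forward_iter:
  assumes "Hp \<pi> p h" "AE x in \<pi>. TT h x = h x"
  shows "Lp_mem \<pi> p ((TT ^^ n) h) \<and> (AE x in \<pi>. (TT ^^ n) h x = h x)"
proof (induction n)
  case 0
  then show ?case using assms unfolding Hp_def by simp
next
  case (Suc n)
  define u where "u = (TT ^^ n) h"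
  have u: "Lp_mem \<pi> p u" "AE x in \<pi>. u x = h x" using Suc u_def by auto
  have hL: "Lp_mem \<pi> p h" using assms unfolding Hp_def by simp
  have "AE x in \<pi>. AE y in K x. u y = h y" by (rule transfer[OF u(2)])
  then have "AE x in \<pi>. VV u x = VV h x"
    by (rule eventually_mono) (rule Vop_cong[OF Lp_meas[OF u(1)] Lp_meas[OF hL]])
  then have "AE x in \<pi>. TT u x = h x"
    using assms(2) by eventually_elim (simp add: TT_eq)
  then show ?case using T_Lp[OF u(1)] by (simp add: u_def)
qed

lemma forward:
  assumes "Hp \<pi> p h" "AE x in \<pi>. TT h x = h x"
  shows "(\<lambda>n. Lp_norm \<pi> p (\<lambda>x. (TT ^^ n) h x - h x)) \<longlonglongrightarrow> 0"
proof -
  have "Lp_norm \<pi> p (\<lambda>x. (TT ^^ n) h x - h x) = 0" for n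
  proof -
    have "AE x in \<pi>. \<bar>(TT ^^ n) h x - h x\<bar> powr p = 0"
      using forward_iter[OF assms, of n] by (auto elim!: eventually_mono)
    then have "(\<integral>x. \<bar>(TT ^^ n) h x - h x\<bar> powr p \<partial>\<pi>) = 0" by (rule integral_eq_zero_AE)
    then show ?thesis unfolding Lp_norm_def by simp
  qed
  then show ?thesis by simp
qed

lemma mono_V:
  assumes "Lp_mem \<pi> p a" "Lp_mem \<pi> p b" "AE x in \<pi>. 0 \<le> a x \<and> a x \<le> b x"
  shows "AE x in \<pi>. 0 \<le> VV a x \<and> VV a x \<le> VV b x"
  using transfer[OF assms(3)] V_fin[OF assms(2)]
proof eventually_elim
  case (elim x)
  have am: "a \<in> borel_measurable borel" and bm: "b \<in> borel_measurable borel"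
    using assms Lp_meas by auto
  have a0: "AE y in K x. 0 \<le> a y" using elim(1) by (rule eventually_mono) auto
  have b0: "AE y in K x. 0 \<le> b y" using elim(1) by (rule eventually_mono) auto
  have "W a x \<le> W b x"
    unfolding W_def
    by (rule nn_integral_mono_AE)
       (use elim(1) in \<open>rule eventually_mono, auto intro!: ennreal_leI mult_right_mono\<close>)
  moreover have "W b x < \<infinity>" using W_le[of b x] elim(2) by (rule le_less_trans)
  ultimately have "enn2real (W a x) \<le> enn2real (W b x)" by (simp add: enn2real_mono)
  then show ?case using V_eq[OF am a0] V_eq[OF bm b0] Vop_nonneg[OF a0] by simp
qed

lemma mono_conv:
  fixes f :: "nat \<Rightarrow> real"
  assumes "\<And>n. 0 \<le> f n" "\<And>n. f n \<le> f (Suc n)" "\<And>n. f n \<le> B"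
  shows "f \<longlonglongrightarrow> enn2real (SUP n. ennreal (f n))" "0 \<le> enn2real (SUP n. ennreal (f n))"
    "enn2real (SUP n. ennreal (f n)) \<le> B"
proof -
  have inc: "incseq f" using assms(2) by (rule incseq_SucI)
  have "bdd_above (range f)" using assms(3) by (intro bdd_aboveI[of _ B]) auto
  then have L: "f \<longlonglongrightarrow> (SUP n. f n)" using LIMSEQ_incseq_SUP inc by blast
  have "incseq (\<lambda>n. ennreal (f n))" using inc by (auto simp: incseq_def intro: ennreal_leI)
  then have "(\<lambda>n. ennreal (f n)) \<longlonglongrightarrow> (SUP n. ennreal (f n))" by (rule LIMSEQ_SUP)
  moreover have "(\<lambda>n. ennreal (f n)) \<longlonglongrightarrow> ennreal (SUP n. f n)" using L by (rule tendsto_ennrealI)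
  ultimately have eq: "(SUP n. ennreal (f n)) = ennreal (SUP n. f n)" by (rule LIMSEQ_unique)
  have nn: "0 \<le> (SUP n. f n)" using L assms(1) by (intro LIMSEQ_le_const) auto
  have le: "(SUP n. f n) \<le> B" using L assms(3) by (intro LIMSEQ_le_const2) auto
  show "f \<longlonglongrightarrow> enn2real (SUP n. ennreal (f n))" "0 \<le> enn2real (SUP n. ennreal (f n))"
    "enn2real (SUP n. ennreal (f n)) \<le> B"
    using eq nn le L by simp_all
qed

lemma mono_T:
  assumes "Lp_mem \<pi> p a" "Lp_mem \<pi> p b" "AE x in \<pi>. 0 \<le> a x \<and> a x \<le> b x"
  shows "AE x in \<pi>. 0 \<le> TT a x \<and> TT a x \<le> TT b x"
  using mono_V[OF assms] by (rule eventually_mono) (auto simp: TT_eq intro: add_nonneg_nonneg gh_nonneg)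

lemma super:
  assumes hH: "Hp \<pi> p h" and hs: "AE x in \<pi>. TT h x \<le> h x"
  shows "\<exists>F. Hp \<pi> p F \<and> (AE x in \<pi>. TT F x = F x)"
proof -
  define u where "u n = (TT ^^ n) (\<lambda>_. 0)" for n
  have uS: "u (Suc n) = TT (u n)" for n by (simp add: u_def)
  have hL: "Lp_mem \<pi> p h" and h0: "AE x in \<pi>. 0 \<le> h x" using hH unfolding Hp_def by auto
  have zL: "Lp_mem \<pi> p (\<lambda>_. 0)"
    by (rule Lp_dom[OF _ hL]) auto
  have inv: "Lp_mem \<pi> p (u n) \<and> (AE x in \<pi>. 0 \<le> u n x \<and> u n x \<le> u (Suc n) x \<and> u (Suc n) x \<le> h x)" for n
  proof (induction n)
    case 0
    have "AE x in \<pi>. 0 \<le> TT (\<lambda>_. 0) x \<and> TT (\<lambda>_. 0) x \<le> TT h x"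
      by (rule mono_T[OF zL hL]) (use h0 in \<open>auto elim!: eventually_mono\<close>)
    then have "AE x in \<pi>. 0 \<le> u 0 x \<and> u 0 x \<le> u (Suc 0) x \<and> u (Suc 0) x \<le> h x"
      using hs by eventually_elim (auto simp: u_def)
    then show ?case using zL by (simp add: u_def)
  next
    case (Suc n)
    have L: "Lp_mem \<pi> p (u (Suc n))" using T_Lp Suc uS by simp
    have a: "AE x in \<pi>. 0 \<le> TT (u n) x \<and> TT (u n) x \<le> TT (u (Suc n)) x"
      by (rule mono_T[OF conjunct1[OF Suc] L]) (use conjunct2[OF Suc] in \<open>rule eventually_mono, auto\<close>)
    have b: "AE x in \<pi>. 0 \<le> TT (u (Suc n)) x \<and> TT (u (Suc n)) x \<le> TT h x"
      by (rule mono_T[OF L hL]) (use conjunct2[OF Suc] in \<open>rule eventually_mono, auto\<close>)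
    have "AE x in \<pi>. 0 \<le> u (Suc n) x \<and> u (Suc n) x \<le> u (Suc (Suc n)) x \<and> u (Suc (Suc n)) x \<le> h x"
      using a b hs by eventually_elim (auto simp: uS)
    then show ?case using L by simp
  qed
  have uL: "Lp_mem \<pi> p (u n)" for n using inv by simp
  have um[measurable]: "u n \<in> borel_measurable borel" for n using Lp_meas[OF uL] .
  have AEu: "AE x in \<pi>. \<forall>n. 0 \<le> u n x \<and> u n x \<le> u (Suc n) x \<and> u (Suc n) x \<le> h x"
    using inv by (simp add: AE_all_countable)
  define F where "F x = enn2real (SUP n. ennreal (u n x))" for x
  have Fm[measurable]: "F \<in> borel_measurable borel" unfolding F_def by measurable
  have AEF: "AE x in \<pi>. (\<forall>n. 0 \<le> u n x \<and> u n x \<le> h x) \<and> (\<lambda>n. u n x) \<longlonglongrightarrow> F x \<and> 0 \<le> F x \<and> F x \<le> h x"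
    using AEu
  proof eventually_elim
    case (elim x)
    have "0 \<le> u n x" "u n x \<le> u (Suc n) x" "u n x \<le> h x" for n
      using elim by (auto intro: order_trans)
    note mc = mono_conv[of "\<lambda>n. u n x", OF this]
    show ?case using mc elim \<open>\<And>n. u n x \<le> h x\<close> unfolding F_def by auto
  qed
  have FL: "Lp_mem \<pi> p F"
    by (rule Lp_dom[OF Fm hL]) (use AEF in \<open>rule eventually_mono, auto\<close>)
  have "AE x in \<pi>. 0 \<le> F x" using AEF by (rule eventually_mono) auto
  then have FH: "Hp \<pi> p F" unfolding Hp_def using FL by simp
  have "AE x in \<pi>. TT F x = F x"
    using transfer[OF AEF] V_fin[OF hL] AEF
  proof eventually_elim
    case (elim x)
    define c where "c y = enn2real (phihat \<nu> \<phi> x y)" for y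
    have cm[measurable]: "c \<in> borel_measurable borel"
      unfolding c_def by (intro borel_measurable_enn2real[OF phihat_meas])
    have c0: "0 \<le> c y" for y unfolding c_def by simp
    have hm: "(\<lambda>y. \<bar>h y\<bar>) \<in> borel_measurable borel" using Lp_meas[OF hL] by measurable
    have wI: "integrable (K x) (\<lambda>y. \<bar>h y\<bar> * c y)"
      unfolding c_def by (rule integrable_K[OF hm]) (use elim(2) in simp)
    have "(\<lambda>n. VV (u n) x) \<longlonglongrightarrow> VV F x"
      unfolding Vop_def c_def[symmetric]
    proof (rule integral_dominated_convergence[OF _ _ wI])
      show "(\<lambda>y. F y * c y) \<in> borel_measurable (K x)" unfolding meas_K by measurable
      show "(\<lambda>y. u n y * c y) \<in> borel_measurable (K x)" for n unfolding meas_K by measurable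
      show "AE y in K x. (\<lambda>n. u n y * c y) \<longlonglongrightarrow> F y * c y"
        using elim(1) by (rule eventually_mono) (auto intro: tendsto_mult_right)
      show "AE y in K x. norm (u n y * c y) \<le> \<bar>h y\<bar> * c y" for n
        using elim(1) by (rule eventually_mono) (auto simp: abs_mult c0 intro!: mult_right_mono)
    qed
    moreover have "(\<lambda>n. VV (u n) x) = (\<lambda>n. u (Suc n) x - gh x)"
      by (simp add: uS TT_eq)
    moreover have "(\<lambda>n. u (Suc n) x - gh x) \<longlonglongrightarrow> F x - gh x"
    proof -
      have "(\<lambda>n. u n x) \<longlonglongrightarrow> F x" using elim(3) by simp
      then have "(\<lambda>n. u (Suc n) x) \<longlonglongrightarrow> F x" by (rule LIMSEQ_Suc)
      then show ?thesis by (rule tendsto_diff) simp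
    qed
    ultimately have "(\<lambda>n. VV (u n) x) \<longlonglongrightarrow> F x - gh x" by simp
    with \<open>(\<lambda>n. VV (u n) x) \<longlonglongrightarrow> VV F x\<close> have "VV F x = F x - gh x" by (rule LIMSEQ_unique)
    then show ?case by (simp add: TT_eq)
  qed
  then show ?thesis using FH by blast
qed

lemma Lp_norm_to_int:
  assumes "(\<lambda>n. Lp_norm \<pi> p (v n)) \<longlonglongrightarrow> 0"
  shows "(\<lambda>n. \<integral>x. \<bar>v n x\<bar> powr p \<partial>\<pi>) \<longlonglongrightarrow> 0"
proof -
  have p0: "0 < p" using p_ge by simp
  have eq: "(\<integral>x. \<bar>v n x\<bar> powr p \<partial>\<pi>) = Lp_norm \<pi> p (v n) powr p" for n
  proof -
    have I0: "0 \<le> (\<integral>x. \<bar>v n x\<bar> powr p \<partial>\<pi>)" by (rule integral_nonneg_AE) simp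
    show ?thesis unfolding Lp_norm_def using p0 I0 by (simp add: powr_powr)
  qed
  have "(\<lambda>n. Lp_norm \<pi> p (v n) powr p) \<longlonglongrightarrow> 0"
    by (rule tendsto_zero_powrI[OF assms tendsto_const _ p0]) (simp add: Lp_norm_def)
  then show ?thesis by (simp add: eq)
qed

lemma AE_subseq:
  assumes vL: "\<And>n. Lp_mem \<pi> p (v n)" and hL: "Lp_mem \<pi> p h"
    and conv: "(\<lambda>n. Lp_norm \<pi> p (\<lambda>x. v n x - h x)) \<longlonglongrightarrow> 0"
  shows "\<exists>r. strict_mono r \<and> (AE x in \<pi>. (\<lambda>n. v (r n) x) \<longlonglongrightarrow> h x)"
proof -
  have p0: "0 < p" using p_ge by simp
  have dL: "Lp_mem \<pi> p (\<lambda>x. v n x - h x)" for n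
    using Lp_add[OF vL Lp_uminus[OF hL]] by simp
  have "\<exists>r. strict_mono r \<and> (AE x in \<pi>. (\<lambda>n. \<bar>v (r n) x - h x\<bar> powr p) \<longlonglongrightarrow> 0)"
  proof (rule tendsto_L1_AE_subseq)
    show "integrable \<pi> (\<lambda>x. \<bar>v n x - h x\<bar> powr p)" for n using dL[of n] unfolding Lp_mem_def by simp
    show "(\<lambda>n. \<integral>x. norm (\<bar>v n x - h x\<bar> powr p) \<partial>\<pi>) \<longlonglongrightarrow> 0"
      using Lp_norm_to_int[OF conv] by simp
  qed
  then obtain r where r: "strict_mono r" "AE x in \<pi>. (\<lambda>n. \<bar>v (r n) x - h x\<bar> powr p) \<longlonglongrightarrow> 0"
    by blast
  have "AE x in \<pi>. (\<lambda>n. v (r n) x) \<longlonglongrightarrow> h x"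
    using r(2)
  proof (rule eventually_mono)
    fix x assume a: "(\<lambda>n. \<bar>v (r n) x - h x\<bar> powr p) \<longlonglongrightarrow> 0"
    have "(\<lambda>n. (\<bar>v (r n) x - h x\<bar> powr p) powr (1 / p)) \<longlonglongrightarrow> 0"
      by (rule tendsto_zero_powrI[OF a tendsto_const]) (use p0 in auto)
    then have "(\<lambda>n. \<bar>v (r n) x - h x\<bar>) \<longlonglongrightarrow> 0"
      using p0 by (simp add: powr_powr)
    then have "(\<lambda>n. v (r n) x - h x) \<longlonglongrightarrow> 0" by (rule tendsto_rabs_zero_cancel)
    then show "(\<lambda>n. v (r n) x) \<longlonglongrightarrow> h x" by (simp add: LIM_zero_iff)
  qed
  then show ?thesis using r(1) by blast
qed

lemma T_Hp: "Hp \<pi> p u \<Longrightarrow> Hp \<pi> p (TT u)"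
proof -
  assume u: "Hp \<pi> p u"
  have uL: "Lp_mem \<pi> p u" and u0: "AE x in \<pi>. 0 \<le> u x" using u unfolding Hp_def by auto
  have "AE x in \<pi>. 0 \<le> TT u x"
    using transfer[OF u0] by (rule eventually_mono) (auto simp: TT_eq intro!: add_nonneg_nonneg Vop_nonneg gh_nonneg)
  then show ?thesis using T_Lp[OF uL] unfolding Hp_def by simp
qed

lemma backward:
  assumes gH: "Hp \<pi> p g0" and hH: "Hp \<pi> p h"
    and conv: "(\<lambda>n. Lp_norm \<pi> p (\<lambda>x. (TT ^^ n) g0 x - h x)) \<longlonglongrightarrow> 0"
  shows "AE x in \<pi>. TT h x \<le> h x"
proof -
  define f where "f n = (TT ^^ n) g0" for n
  have fS: "f (Suc n) = TT (f n)" for n by (simp add: f_def)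
  have fH: "Hp \<pi> p (f n)" for n
    by (induction n) (auto simp: fS gH T_Hp, simp add: f_def gH)
  have fL: "Lp_mem \<pi> p (f n)" for n using fH unfolding Hp_def by simp
  have hL: "Lp_mem \<pi> p h" and h0: "AE x in \<pi>. 0 \<le> h x" using hH unfolding Hp_def by auto
  have conv': "(\<lambda>n. Lp_norm \<pi> p (\<lambda>x. f n x - h x)) \<longlonglongrightarrow> 0" using conv by (simp add: f_def)
  obtain r where r: "strict_mono r" "AE x in \<pi>. (\<lambda>n. f (r n) x) \<longlonglongrightarrow> h x"
    using AE_subseq[OF fL hL conv'] by blast
  have conv2: "(\<lambda>n. Lp_norm \<pi> p (\<lambda>x. f (Suc (r n)) x - h x)) \<longlonglongrightarrow> 0"
  proof -
    have "(\<lambda>n. Lp_norm \<pi> p (\<lambda>x. f (Suc n) x - h x)) \<longlonglongrightarrow> 0" using conv' by (rule LIMSEQ_Suc)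
    from LIMSEQ_subseq_LIMSEQ[OF this r(1)] show ?thesis by (simp add: o_def)
  qed
  obtain s where s: "strict_mono s" "AE x in \<pi>. (\<lambda>n. f (Suc (r (s n))) x) \<longlonglongrightarrow> h x"
    using AE_subseq[OF fL hL conv2] by blast
  define m where "m n = r (s n)" for n
  have AE1: "AE x in \<pi>. (\<lambda>n. f (m n) x) \<longlonglongrightarrow> h x"
    using r(2) by (rule eventually_mono) (use LIMSEQ_subseq_LIMSEQ[OF _ s(1)] in \<open>auto simp: m_def o_def\<close>)
  have AE2: "AE x in \<pi>. (\<lambda>n. f (Suc (m n)) x) \<longlonglongrightarrow> h x"
    using s(2) by (simp add: m_def)
  have AEn: "AE x in \<pi>. \<forall>n. 0 \<le> f n x"
    using fH unfolding Hp_def by (simp add: AE_all_countable)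
  have AEfin: "AE x in \<pi>. \<forall>n. (\<integral>\<^sup>+ y. ennreal \<bar>f n y\<bar> * phihat \<nu> \<phi> x y \<partial>(K x)) < \<infinity>"
    using V_fin[OF fL] by (simp add: AE_all_countable)
  have AEK: "AE x in \<pi>. (\<forall>n. 0 \<le> f n x) \<and> 0 \<le> h x \<and> (\<lambda>n. f (m n) x) \<longlonglongrightarrow> h x"
    using AEn h0 AE1 by eventually_elim auto
  show ?thesis
    using transfer[OF AEK] AEfin V_fin[OF hL] AE2
  proof eventually_elim
    case (elim x)
    define c where "c y = enn2real (phihat \<nu> \<phi> x y)" for y
    have cm[measurable]: "c \<in> borel_measurable borel"
      unfolding c_def by (intro borel_measurable_enn2real[OF phihat_meas])
    have fm[measurable]: "f n \<in> borel_measurable borel" for n using Lp_meas[OF fL] .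
    have hm[measurable]: "h \<in> borel_measurable borel" using Lp_meas[OF hL] .
    have Wf: "W (f n) x = ennreal (f (Suc n) x - gh x)" for n
    proof -
      have fin: "W (f n) x < \<infinity>" using W_le[of "f n" x] elim(2)[rule_format, of n] by (rule le_less_trans)
      have "VV (f n) x = enn2real (W (f n) x)"
        by (rule V_eq[OF fm]) (use elim(1) in \<open>rule eventually_mono, auto\<close>)
      then have "W (f n) x = ennreal (VV (f n) x)" using fin by (simp add: ennreal_enn2real_if)
      then show ?thesis by (simp add: fS TT_eq)
    qed
    have Vnn: "0 \<le> VV (f n) x" for n
      by (rule Vop_nonneg) (use elim(1) in \<open>rule eventually_mono, auto\<close>)
    have lim1: "(\<lambda>n. f (Suc (m n)) x - gh x) \<longlonglongrightarrow> h x - gh x"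
      using elim(4) by (intro tendsto_diff) auto
    have hg0: "0 \<le> h x - gh x"
    proof (rule LIMSEQ_le_const[OF lim1])
      show "\<exists>N. \<forall>n\<ge>N. 0 \<le> f (Suc (m n)) x - gh x"
        using Vnn by (auto simp: fS TT_eq)
    qed
    have "W h x = (\<integral>\<^sup>+ y. liminf (\<lambda>n. ennreal (f (m n) y * c y)) \<partial>(K x))"
      unfolding W_def c_def[symmetric]
    proof (rule nn_integral_cong_AE)
      show "AE y in K x. ennreal (h y * c y) = liminf (\<lambda>n. ennreal (f (m n) y * c y))"
        using elim(1)
      proof (rule eventually_mono)
        fix y assume "(\<forall>n. 0 \<le> f n y) \<and> 0 \<le> h y \<and> (\<lambda>n. f (m n) y) \<longlonglongrightarrow> h y"
        then have "(\<lambda>n. ennreal (f (m n) y * c y)) \<longlonglongrightarrow> ennreal (h y * c y)"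
          by (intro tendsto_ennrealI tendsto_mult_right) auto
        then show "ennreal (h y * c y) = liminf (\<lambda>n. ennreal (f (m n) y * c y))"
          by (simp add: lim_imp_Liminf)
      qed
    qed
    also have "\<dots> \<le> liminf (\<lambda>n. \<integral>\<^sup>+ y. ennreal (f (m n) y * c y) \<partial>(K x))"
      by (rule nn_integral_liminf) (simp add: meas_K)
    also have "\<dots> = liminf (\<lambda>n. ennreal (f (Suc (m n)) x - gh x))"
      using Wf by (simp add: W_def c_def)
    also have "\<dots> = ennreal (h x - gh x)"
      by (rule lim_imp_Liminf) (use lim1 in \<open>auto intro: tendsto_ennrealI\<close>)
    finally have Wh: "W h x \<le> ennreal (h x - gh x)" .
    have "VV h x = enn2real (W h x)"
      by (rule V_eq[OF hm]) (use elim(1) in \<open>rule eventually_mono, auto\<close>)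
    also have "\<dots> \<le> enn2real (ennreal (h x - gh x))"
      using Wh by (simp add: enn2real_mono)
    also have "\<dots> = h x - gh x" using hg0 by simp
    finally show ?case by (simp add: TT_eq)
  qed
qed

end

theorem mainTheorem12:
  fixes \<pi> :: "'x::polish_space measure" and K :: "'x \<Rightarrow> 'x measure"
    and \<nu> :: "'w measure" and \<phi> g :: "'x \<Rightarrow> 'x \<Rightarrow> 'w \<Rightarrow> real" and p :: real
  assumes "standing_setting \<pi> K \<nu> \<phi> g"
    and "A1 \<pi> K \<nu> \<phi> g"
    and "A2 \<pi> K"
    and "A3 \<pi> K \<nu> \<phi> g p"
  shows "(\<exists>h. Hp \<pi> p h \<and> (AE x in \<pi>. Top K \<nu> \<phi> g h x = h x)) \<longleftrightarrow>
         (\<exists>g0 h. Hp \<pi> p g0 \<and> Hp \<pi> p h \<and>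
            (\<lambda>n. Lp_norm \<pi> p (\<lambda>x. (Top K \<nu> \<phi> g ^^ n) g0 x - h x)) \<longlonglongrightarrow> 0)"
proof -
  interpret mt \<pi> K \<nu> \<phi> g p using assms(1,4) by unfold_locales
  show ?thesis
  proof
    assume "\<exists>h. Hp \<pi> p h \<and> (AE x in \<pi>. Top K \<nu> \<phi> g h x = h x)"
    then obtain h where "Hp \<pi> p h" "AE x in \<pi>. Top K \<nu> \<phi> g h x = h x" by blast
    then show "\<exists>g0 h. Hp \<pi> p g0 \<and> Hp \<pi> p h \<and>
            (\<lambda>n. Lp_norm \<pi> p (\<lambda>x. (Top K \<nu> \<phi> g ^^ n) g0 x - h x)) \<longlonglongrightarrow> 0"
      using forward by blast
  next
    assume "\<exists>g0 h. Hp \<pi> p g0 \<and> Hp \<pi> p h \<and>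
            (\<lambda>n. Lp_norm \<pi> p (\<lambda>x. (Top K \<nu> \<phi> g ^^ n) g0 x - h x)) \<longlonglongrightarrow> 0"
    then obtain g0 h where "Hp \<pi> p g0" "Hp \<pi> p h"
      "(\<lambda>n. Lp_norm \<pi> p (\<lambda>x. (Top K \<nu> \<phi> g ^^ n) g0 x - h x)) \<longlonglongrightarrow> 0" by blast
    from super[OF \<open>Hp \<pi> p h\<close> backward[OF this]]
    show "\<exists>h. Hp \<pi> p h \<and> (AE x in \<pi>. Top K \<nu> \<phi> g h x = h x)" .
  qed
qed

end
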